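(* Let $m\geq 0$ be an integer. Let the premiums $\{X_n, n\geq 1\}$ and the claims $\{Y_n, n\geq 1\}$ be sequences of nonnegative, identically distributed, $m$-dependent random variables with finite expectations, and let the rates of interest $\{I_n, n\geq 1\}$ be a sequence of i.i.d. nonnegative random variables with finite expectations. Suppose that the sequences $\{X_n\}$, $\{Y_n\}$, $\{I_n\}$ are mutually independent. For $u\geq 0$ define the surplus process by $U_0=u$ and $$U_n=(U_{n-1}+X_n)(1+I_n)-Y_n,\quad n\geq 1,$$ and the ultimate ruin probability $\Psi(u)=\mathbb{P}\big(\bigcup_{n=1}^\infty \{U_n<0\}\big)$. If there exists a positive real number $R$ satisfying $$\mathbb{E}\Big(e^{R\left(Y_1(1+I_1)^{-1}-X_1\right)}\Big)\leq 1,$$ then $$\Psi(u)\leq (m+1)e^{-R\frac{u}{m+1}}\quad\text{for all } u>\frac{(m+1)\ln(m+1)}{R}.$$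
   Context: A sequence of random variables $\{X_n, n\geq 1\}$ is called $m$-dependent (for a fixed nonnegative integer $m$) if the $\sigma$-algebras $\sigma\{X_1,\dots,X_n\}$ and $\sigma\{X_{n+k},X_{n+k+1},\dots\}$ are independent for all $k\geq m+1$ and all $n\geq 1$. In particular, $0$-dependence is independence. *)

theory Defs
  imports "HOL-Probability.Probability"
begin

definition gen_sigma :: "'a measure \<Rightarrow> (nat \<Rightarrow> 'a \<Rightarrow> real) \<Rightarrow> nat set \<Rightarrow> 'a set set" where
  "gen_sigma M X J = sigma_sets (space M) (\<Union>i\<in>J. {X i -` A \<inter> space M | A. A \<in> sets borel})"

definition m_dependent :: "'a measure \<Rightarrow> nat \<Rightarrow> (nat \<Rightarrow> 'a \<Rightarrow> real) \<Rightarrow> bool" where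
  "m_dependent M m X \<longleftrightarrow>
     (\<forall>n\<ge>1. \<forall>k\<ge>m+1. prob_space.indep_set M (gen_sigma M X {1..n}) (gen_sigma M X {n+k..}))"

definition ident_distr :: "'a measure \<Rightarrow> (nat \<Rightarrow> 'a \<Rightarrow> real) \<Rightarrow> bool" where
  "ident_distr M X \<longleftrightarrow> (\<forall>n\<ge>1. distr M borel (X n) = distr M borel (X 1))"

fun surplus :: "real \<Rightarrow> (nat \<Rightarrow> 'a \<Rightarrow> real) \<Rightarrow> (nat \<Rightarrow> 'a \<Rightarrow> real) \<Rightarrow> (nat \<Rightarrow> 'a \<Rightarrow> real) \<Rightarrow> nat \<Rightarrow> 'a \<Rightarrow> real" where
  "surplus u X Y I 0 \<omega> = u"
| "surplus u X Y I (Suc n) \<omega> =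
     (surplus u X Y I n \<omega> + X (Suc n) \<omega>) * (1 + I (Suc n) \<omega>) - Y (Suc n) \<omega>"

definition ruin_prob :: "'a measure \<Rightarrow> (nat \<Rightarrow> 'a \<Rightarrow> real) \<Rightarrow> (nat \<Rightarrow> 'a \<Rightarrow> real) \<Rightarrow> (nat \<Rightarrow> 'a \<Rightarrow> real) \<Rightarrow> real \<Rightarrow> real" where
  "ruin_prob M X Y I u = measure M (\<Union>n\<in>{1..}. {\<omega>\<in>space M. surplus u X Y I n \<omega> < 0})"

end

theory Submission
  imports Defs
begin


lemma sa_Int: "sigma_algebra \<Omega> S \<Longrightarrow> a \<in> S \<Longrightarrow> b \<in> S \<Longrightarrow> a \<inter> b \<in> S"
proof -
  assume "sigma_algebra \<Omega> S" "a \<in> S" "b \<in> S"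
  then interpret sigma_algebra \<Omega> S by simp
  show ?thesis using \<open>a \<in> S\<close> \<open>b \<in> S\<close> by blast
qed

lemma sa_top: "sigma_algebra \<Omega> S \<Longrightarrow> \<Omega> \<in> S"
proof -
  assume "sigma_algebra \<Omega> S"
  then interpret sigma_algebra \<Omega> S by simp
  show ?thesis by blast
qed

lemma sa_space: "sigma_algebra \<Omega> S \<Longrightarrow> a \<in> S \<Longrightarrow> a \<subseteq> \<Omega>"
proof -
  assume "sigma_algebra \<Omega> S" "a \<in> S"
  then interpret sigma_algebra \<Omega> S by simp
  show ?thesis using \<open>a \<in> S\<close> sets_into_space by blast
qed

context prob_space begin

lemma gen_sigma_sa: "sigma_algebra (space M) (gen_sigma M X J)"
  unfolding gen_sigma_def by (rule sigma_algebra_sigma_sets) auto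

lemma gen_sigma_mono: "J \<subseteq> J' \<Longrightarrow> gen_sigma M X J \<subseteq> gen_sigma M X J'"
  unfolding gen_sigma_def by (rule sigma_sets_subseteq) auto

lemma vs_sub: "i \<in> J \<Longrightarrow> A \<in> sets borel \<Longrightarrow> X i -` A \<inter> space M \<in> gen_sigma M X J"
  unfolding gen_sigma_def by (rule sigma_sets.Basic) auto

lemma gen_sigma_events: "(\<And>i. i \<in> J \<Longrightarrow> X i \<in> borel_measurable M) \<Longrightarrow> gen_sigma M X J \<subseteq> events"
  unfolding gen_sigma_def by (rule sets.sigma_sets_subset) auto

lemma indep_set_mono: "indep_set A B \<Longrightarrow> A' \<subseteq> A \<Longrightarrow> B' \<subseteq> B \<Longrightarrow> indep_set A' B'"
  unfolding indep_sets2_eq by blast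

lemma indep_set_triv: "B \<subseteq> events \<Longrightarrow> indep_set (sigma_sets (space M) {}) B"
  unfolding indep_sets2_eq sigma_sets_empty_eq
  using sets.sets_into_space by (auto simp: Int_absorb1 subset_iff prob_space)

lemma indep_set_sym: "indep_set A B \<Longrightarrow> indep_set B A"
  unfolding indep_sets2_eq by (metis Int_commute mult.commute)

lemma prob3:
  assumes F: "indep_sets F {0,1,2::nat}" and c: "c0 \<in> F 0" "c1 \<in> F 1" "c2 \<in> F 2"
  shows "prob (c0 \<inter> c1 \<inter> c2) = prob c0 * prob c1 * prob c2"
proof -
  have "prob (\<Inter>j\<in>{0,1,2::nat}. (\<lambda>j. if j = 0 then c0 else if j = 1 then c1 else c2) j)
      = (\<Prod>j\<in>{0,1,2::nat}. prob ((\<lambda>j. if j = 0 then c0 else if j = 1 then c1 else c2) j))"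
    by (rule indep_setsD[OF F]) (use c in auto)
  moreover have "c0 \<inter> c1 \<inter> c2 = c2 \<inter> (c1 \<inter> c0)" by blast
  ultimately show ?thesis by (simp add: mult.assoc)
qed

lemma combine3:
  assumes F: "indep_sets F {0,1,2::nat}"
    and saF: "\<And>i. i \<le> 2 \<Longrightarrow> sigma_algebra (space M) (F i)"
    and saA: "\<And>i. i \<le> 2 \<Longrightarrow> sigma_algebra (space M) (A i)"
    and saB: "\<And>i. i \<le> 2 \<Longrightarrow> sigma_algebra (space M) (B i)"
    and AF: "\<And>i. i \<le> 2 \<Longrightarrow> A i \<subseteq> F i"
    and BF: "\<And>i. i \<le> 2 \<Longrightarrow> B i \<subseteq> F i"
    and AB: "\<And>i. i \<le> 2 \<Longrightarrow> indep_set (A i) (B i)"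
  shows "indep_set (sigma_sets (space M) (A 0 \<union> A 1 \<union> A 2)) (sigma_sets (space M) (B 0 \<union> B 1 \<union> B 2))"
proof -
  define EA where "EA = {a0 \<inter> a1 \<inter> a2 | a0 a1 a2. a0 \<in> A 0 \<and> a1 \<in> A 1 \<and> a2 \<in> A 2}"
  define EB where "EB = {a0 \<inter> a1 \<inter> a2 | a0 a1 a2. a0 \<in> B 0 \<and> a1 \<in> B 1 \<and> a2 \<in> B 2}"
  have Fev: "F i \<subseteq> events" if "i \<le> 2" for i
  proof -
    have "i \<in> {0,1,2}" using that by auto
    moreover from F have "\<forall>i\<in>{0,1,2}. F i \<subseteq> events" unfolding indep_sets_def by (rule conjunct1)
    ultimately show ?thesis by blast
  qed
  have FI: "a \<inter> b \<in> F i" if "i \<le> 2" "a \<in> F i" "b \<in> F i" for i a b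
    using saF[OF that(1)] that(2,3) by (auto intro: sa_Int)
  have ev: "a0 \<inter> a1 \<inter> a2 \<in> events" if "a0 \<in> F 0" "a1 \<in> F 1" "a2 \<in> F 2" for a0 a1 a2
  proof -
    have "a0 \<in> events" "a1 \<in> events" "a2 \<in> events" using Fev[of 0] Fev[of 1] Fev[of 2] that by auto
    then show ?thesis by auto
  qed
  have iEAB: "indep_set EA EB"
  proof (rule indep_setI)
    show "EA \<subseteq> events" unfolding EA_def using ev AF[of 0] AF[of 1] AF[of 2] by (auto 0 0 simp del: Int_iff) (meson subsetD zero_le le_refl one_le_numeral)
    show "EB \<subseteq> events" unfolding EB_def using ev BF[of 0] BF[of 1] BF[of 2] by (auto 0 0 simp del: Int_iff) (meson subsetD zero_le le_refl one_le_numeral)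
  next
    fix a b assume "a \<in> EA" "b \<in> EB"
    then obtain a0 a1 a2 b0 b1 b2 where a: "a = a0 \<inter> a1 \<inter> a2" "a0 \<in> A 0" "a1 \<in> A 1" "a2 \<in> A 2"
      and b: "b = b0 \<inter> b1 \<inter> b2" "b0 \<in> B 0" "b1 \<in> B 1" "b2 \<in> B 2"
      unfolding EA_def EB_def by blast
    have inF: "a0 \<in> F 0" "a1 \<in> F 1" "a2 \<in> F 2" "b0 \<in> F 0" "b1 \<in> F 1" "b2 \<in> F 2"
      using a b AF[of 0] AF[of 1] AF[of 2] BF[of 0] BF[of 1] BF[of 2] by auto
    have "a \<inter> b = (a0 \<inter> b0) \<inter> (a1 \<inter> b1) \<inter> (a2 \<inter> b2)" using a b by blast
    moreover have "prob ((a0 \<inter> b0) \<inter> (a1 \<inter> b1) \<inter> (a2 \<inter> b2)) = prob (a0 \<inter> b0) * prob (a1 \<inter> b1) * prob (a2 \<inter> b2)"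
      by (rule prob3[OF F]) (use FI inF in auto)
    ultimately have "prob (a \<inter> b) = prob (a0 \<inter> b0) * prob (a1 \<inter> b1) * prob (a2 \<inter> b2)" by simp
    also have "\<dots> = (prob a0 * prob b0) * (prob a1 * prob b1) * (prob a2 * prob b2)"
      using indep_setD[OF AB[of 0]] indep_setD[OF AB[of 1]] indep_setD[OF AB[of 2]] a b by simp
    also have "\<dots> = (prob a0 * prob a1 * prob a2) * (prob b0 * prob b1 * prob b2)" by simp
    also have "\<dots> = prob a * prob b"
      using prob3[OF F, of a0 a1 a2] prob3[OF F, of b0 b1 b2] inF a b by simp
    finally show "prob (a \<inter> b) = prob a * prob b" .
  qed
  have stA: "Int_stable EA"
  proof (rule Int_stableI)
    fix a b assume "a \<in> EA" "b \<in> EA"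
    then obtain a0 a1 a2 b0 b1 b2 where a: "a = a0 \<inter> a1 \<inter> a2" "a0 \<in> A 0" "a1 \<in> A 1" "a2 \<in> A 2"
      and b: "b = b0 \<inter> b1 \<inter> b2" "b0 \<in> A 0" "b1 \<in> A 1" "b2 \<in> A 2"
      unfolding EA_def by blast
    have "a \<inter> b = (a0 \<inter> b0) \<inter> (a1 \<inter> b1) \<inter> (a2 \<inter> b2)" using a b by blast
    moreover have "a0 \<inter> b0 \<in> A 0" "a1 \<inter> b1 \<in> A 1" "a2 \<inter> b2 \<in> A 2"
      using a b saA[of 0] saA[of 1] saA[of 2] by (auto intro: sa_Int)
    ultimately show "a \<inter> b \<in> EA" unfolding EA_def by blast
  qed
  have stB: "Int_stable EB"
  proof (rule Int_stableI)
    fix a b assume "a \<in> EB" "b \<in> EB"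
    then obtain a0 a1 a2 b0 b1 b2 where a: "a = a0 \<inter> a1 \<inter> a2" "a0 \<in> B 0" "a1 \<in> B 1" "a2 \<in> B 2"
      and b: "b = b0 \<inter> b1 \<inter> b2" "b0 \<in> B 0" "b1 \<in> B 1" "b2 \<in> B 2"
      unfolding EB_def by blast
    have "a \<inter> b = (a0 \<inter> b0) \<inter> (a1 \<inter> b1) \<inter> (a2 \<inter> b2)" using a b by blast
    moreover have "a0 \<inter> b0 \<in> B 0" "a1 \<inter> b1 \<in> B 1" "a2 \<inter> b2 \<in> B 2"
      using a b saB[of 0] saB[of 1] saB[of 2] by (auto intro: sa_Int)
    ultimately show "a \<inter> b \<in> EB" unfolding EB_def by blast
  qed
  have sub3: "C 0 \<union> C 1 \<union> C 2 \<subseteq> {a0 \<inter> a1 \<inter> a2 | a0 a1 a2. a0 \<in> C 0 \<and> a1 \<in> C 1 \<and> a2 \<in> C 2}"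
    if saC: "\<And>i. i \<le> 2 \<Longrightarrow> sigma_algebra (space M) (C i)" for C :: "nat \<Rightarrow> 'a set set"
  proof (intro subsetI)
    have top: "space M \<in> C i" "\<And>a. a \<in> C i \<Longrightarrow> a \<subseteq> space M" if "i \<le> 2" for i
      using saC[OF that] sa_space[of "space M" "C i"] sa_top[of "space M" "C i"] by auto
    have mem: "a0 \<inter> a1 \<inter> a2 \<in> {a0 \<inter> a1 \<inter> a2 |a0 a1 a2. a0 \<in> C 0 \<and> a1 \<in> C 1 \<and> a2 \<in> C 2}"
      if "a0 \<in> C 0" "a1 \<in> C 1" "a2 \<in> C 2" for a0 a1 a2 using that by blast
    fix x assume "x \<in> C 0 \<union> C 1 \<union> C 2"
    then consider "x \<in> C 0" | "x \<in> C 1" | "x \<in> C 2" by blast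
    then show "x \<in> {a0 \<inter> a1 \<inter> a2 |a0 a1 a2. a0 \<in> C 0 \<and> a1 \<in> C 1 \<and> a2 \<in> C 2}"
    proof cases
      case 1 then have "x \<inter> space M \<inter> space M = x" using top(2)[of 0] by auto
      then show ?thesis using mem[OF 1 top(1)[of 1] top(1)[of 2]] by simp
    next
      case 2 then have "space M \<inter> x \<inter> space M = x" using top(2)[of 1] by auto
      then show ?thesis using mem[OF top(1)[of 0] 2 top(1)[of 2]] by simp
    next
      case 3 then have "space M \<inter> space M \<inter> x = x" using top(2)[of 2] by auto
      then show ?thesis using mem[OF top(1)[of 0] top(1)[of 1] 3] by simp
    qed
  qed
  have sA: "A 0 \<union> A 1 \<union> A 2 \<subseteq> EA" unfolding EA_def by (rule sub3[of A]) (rule saA)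
  have sB: "B 0 \<union> B 1 \<union> B 2 \<subseteq> EB" unfolding EB_def by (rule sub3[of B]) (rule saB)
  show ?thesis
    by (rule indep_set_mono[OF indep_set_sigma_sets[OF iEAB stA stB]])
       (rule sigma_sets_subseteq, fact)+
qed



lemma triv_gen: "B \<subseteq> events \<Longrightarrow> indep_set (gen_sigma M Z {}) B"
  unfolding gen_sigma_def by (simp add: indep_set_triv)

lemma gen_Pow: "gen_sigma M Z J \<subseteq> Pow (space M)"
  unfolding gen_sigma_def by (auto dest: sigma_sets_into_sp[rotated])

lemma meas_sigma:
  assumes "G \<subseteq> Pow (space M)" "\<And>B. B \<in> sets borel \<Longrightarrow> f -` B \<inter> space M \<in> G"
  shows "f \<in> borel_measurable (sigma (space M) G)"
  by (rule measurableI) (auto simp: space_measure_of[OF assms(1)] sets_measure_of[OF assms(1)] assms(2))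

lemma indep_gen_distr:
  assumes ind: "indep_set (sigma_sets (space M) GA) (sigma_sets (space M) GB)"
   and GA: "GA \<subseteq> Pow (space M)" and GB: "GB \<subseteq> Pow (space M)"
   and f: "f \<in> measurable (sigma (space M) GA) S" and g: "g \<in> measurable (sigma (space M) GB) T"
   and f': "f \<in> measurable M S" and g': "g \<in> measurable M T"
  shows "distr M S f \<Otimes>\<^sub>M distr M T g = distr M (S \<Otimes>\<^sub>M T) (\<lambda>x. (f x, g x))"
proof -
  have XY: "random_variable (S \<Otimes>\<^sub>M T) (\<lambda>x. (f x, g x))"
    using f' g' by (rule measurable_Pair)
  interpret PX: prob_space "distr M S f" by (rule prob_space_distr) fact
  interpret PY: prob_space "distr M T g" by (rule prob_space_distr) fact
  interpret XY: pair_prob_space "distr M S f" "distr M T g" ..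
  show ?thesis
  proof (rule pair_measure_eqI)
    show "sigma_finite_measure (distr M S f)" ..
    show "sigma_finite_measure (distr M T g)" ..
    fix A B assume A: "A \<in> sets (distr M S f)" and B: "B \<in> sets (distr M T g)"
    have Af: "f -` A \<inter> space M \<in> sigma_sets (space M) GA"
      using measurable_sets[OF f, of A] A by (simp add: space_measure_of[OF GA] sets_measure_of[OF GA])
    have Bg: "g -` B \<inter> space M \<in> sigma_sets (space M) GB"
      using measurable_sets[OF g, of B] B by (simp add: space_measure_of[OF GB] sets_measure_of[OF GB])
    have "emeasure (distr M (S \<Otimes>\<^sub>M T) (\<lambda>x. (f x, g x))) (A \<times> B) = emeasure M ((\<lambda>x. (f x, g x)) -` (A \<times> B) \<inter> space M)"
      using A B by (intro emeasure_distr[OF XY]) auto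
    also have "(\<lambda>x. (f x, g x)) -` (A \<times> B) \<inter> space M = (f -` A \<inter> space M) \<inter> (g -` B \<inter> space M)" by auto
    also have "emeasure M \<dots> = emeasure M (f -` A \<inter> space M) * emeasure M (g -` B \<inter> space M)"
      using indep_setD[OF ind Af Bg]
      by (simp add: emeasure_eq_measure measure_nonneg ennreal_mult)
    also have "\<dots> = emeasure (distr M S f) A * emeasure (distr M T g) B"
      using f' g' A B by (simp add: emeasure_distr)
    finally show "emeasure (distr M S f) A * emeasure (distr M T g) B = emeasure (distr M (S \<Otimes>\<^sub>M T) (\<lambda>x. (f x, g x))) (A \<times> B)" by simp
  qed simp
qed

lemma indep_bound:
  assumes rv: "random_variable MV V" "random_variable MU U"
    and eq: "distr M MV V \<Otimes>\<^sub>M distr M MU U = distr M (MV \<Otimes>\<^sub>M MU) (\<lambda>x. (V x, U x))"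
    and F: "F \<in> borel_measurable (MV \<Otimes>\<^sub>M MU)"
    and phi: "\<phi> \<in> borel_measurable MV"
    and bd: "\<And>v. v \<in> space MV \<Longrightarrow> (\<integral>\<^sup>+\<omega>. F (v, U \<omega>) \<partial>M) \<le> \<phi> v"
  shows "(\<integral>\<^sup>+\<omega>. F (V \<omega>, U \<omega>) \<partial>M) \<le> (\<integral>\<^sup>+\<omega>. \<phi> (V \<omega>) \<partial>M)"
proof -
  interpret PV: prob_space "distr M MV V" by (rule prob_space_distr) fact
  interpret PU: prob_space "distr M MU U" by (rule prob_space_distr) fact
  have F': "F \<in> borel_measurable (distr M MV V \<Otimes>\<^sub>M distr M MU U)"
    using F by (simp add: eq)
  have "(\<integral>\<^sup>+\<omega>. F (V \<omega>, U \<omega>) \<partial>M) = (\<integral>\<^sup>+ x. F x \<partial>(distr M (MV \<Otimes>\<^sub>M MU) (\<lambda>x. (V x, U x))))"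
    by (subst nn_integral_distr) (auto simp: measurable_Pair rv F)
  also have "\<dots> = (\<integral>\<^sup>+ x. F x \<partial>(distr M MV V \<Otimes>\<^sub>M distr M MU U))" using eq by simp
  also have "\<dots> = (\<integral>\<^sup>+ v. \<integral>\<^sup>+ u. F (v,u) \<partial>(distr M MU U) \<partial>(distr M MV V))"
    by (rule PU.nn_integral_fst[symmetric]) (rule F')
  also have "\<dots> \<le> (\<integral>\<^sup>+ v. \<phi> v \<partial>(distr M MV V))"
  proof (rule nn_integral_mono)
    fix v assume v: "v \<in> space (distr M MV V)"
    then have v': "v \<in> space MV" by simp
    have "(\<integral>\<^sup>+ u. F (v,u) \<partial>(distr M MU U)) = (\<integral>\<^sup>+\<omega>. F (v, U \<omega>) \<partial>M)"
      by (subst nn_integral_distr) (auto simp: rv intro!: measurable_compose_Pair1[OF v' F])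
    also have "\<dots> \<le> \<phi> v" by (rule bd[OF v'])
    finally show "(\<integral>\<^sup>+ u. F (v,u) \<partial>(distr M MU U)) \<le> \<phi> v" .
  qed
  also have "\<dots> = (\<integral>\<^sup>+\<omega>. \<phi> (V \<omega>) \<partial>M)"
    by (subst nn_integral_distr) (auto simp: rv phi)
  finally show ?thesis .
qed

end

locale ruin = prob_space M for M :: "'a measure" +
  fixes m :: nat and X Y I :: "nat \<Rightarrow> 'a \<Rightarrow> real" and R :: real
  assumes X_rv: "\<And>n. n \<ge> 1 \<Longrightarrow> X n \<in> borel_measurable M"
    and Y_rv: "\<And>n. n \<ge> 1 \<Longrightarrow> Y n \<in> borel_measurable M"
    and I_rv: "\<And>n. n \<ge> 1 \<Longrightarrow> I n \<in> borel_measurable M"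
    and I_nonneg: "\<And>n \<omega>. n \<ge> 1 \<Longrightarrow> \<omega> \<in> space M \<Longrightarrow> I n \<omega> \<ge> 0"
    and X_id: "ident_distr M X"
    and Y_id: "ident_distr M Y"
    and I_id: "ident_distr M I"
    and X_mdep: "m_dependent M m X"
    and Y_mdep: "m_dependent M m Y"
    and I_indep: "prob_space.indep_vars M (\<lambda>_. borel) I {1..}"
    and XYI_indep: "prob_space.indep_sets M
          (\<lambda>j::nat. if j = 0 then gen_sigma M X {1..}
                     else if j = 1 then gen_sigma M Y {1..}
                     else gen_sigma M I {1..}) {0, 1, 2}"
    and R_pos: "R > 0"
    and R_lund: "(\<integral>\<^sup>+ \<omega>. ennreal (exp (R * (Y 1 \<omega> / (1 + I 1 \<omega>) - X 1 \<omega>))) \<partial>M) \<le> 1"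
begin

lemma gen_ev:
  assumes "\<And>n. n \<ge> 1 \<Longrightarrow> Z n \<in> borel_measurable M" "J \<subseteq> {1..}"
  shows "gen_sigma M Z J \<subseteq> events"
  by (rule gen_sigma_events) (use assms in auto)

lemma mdep_indep:
  assumes md: "m_dependent M m Z" and rv: "\<And>n. n \<ge> 1 \<Longrightarrow> Z n \<in> borel_measurable M" and n: "n \<ge> 1"
  shows "indep_set (gen_sigma M Z {1..n - Suc m}) (gen_sigma M Z {n})"
proof (cases "n - Suc m \<ge> 1")
  case True
  have H: "\<forall>n\<ge>1. \<forall>k\<ge>m+1. indep_set (gen_sigma M Z {1..n}) (gen_sigma M Z {n+k..})"
    using md unfolding m_dependent_def .
  have "indep_set (gen_sigma M Z {1..n - Suc m}) (gen_sigma M Z {n..})"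
    using H[rule_format, of "n - Suc m" "Suc m"] True by simp
  moreover have "gen_sigma M Z {n} \<subseteq> gen_sigma M Z {n..}" by (rule gen_sigma_mono) auto
  ultimately show ?thesis
    by (meson indep_set_mono subset_refl)
next
  case False
  then have "{1..n - Suc m} = {}" by auto
  then show ?thesis using triv_gen gen_ev[OF rv] n by simp
qed

lemma I_indep_set:
  assumes n: "n \<ge> 1"
  shows "indep_set (gen_sigma M I {1..n-1}) (gen_sigma M I {n})"
proof -
  have iv: "indep_sets (\<lambda>i. {I i -` A \<inter> space M | A. A \<in> sets borel}) {1..}"
    using I_indep unfolding indep_vars_def2 by simp
  define K where "K = (\<lambda>b::bool. if b then {1..n-1} else {n})"
  have "indep_sets (\<lambda>j. sigma_sets (space M) (\<Union>i\<in>K j. {I i -` A \<inter> space M | A. A \<in> sets borel})) UNIV"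
  proof (rule indep_sets_collect_sigma)
    show "indep_sets (\<lambda>i. {I i -` A \<inter> space M | A. A \<in> sets borel}) (\<Union>j\<in>UNIV. K j)"
      by (rule indep_sets_mono_index[OF _ iv]) (use n in \<open>auto simp: K_def\<close>)
    show "Int_stable {I i -` A \<inter> space M |A. A \<in> sets borel}" for i
      unfolding Int_stable_def
    proof (intro ballI)
      fix a b assume "a \<in> {I i -` A \<inter> space M |A. A \<in> sets borel}" "b \<in> {I i -` A \<inter> space M |A. A \<in> sets borel}"
      then obtain A B where "a = I i -` A \<inter> space M" "A \<in> sets borel" "b = I i -` B \<inter> space M" "B \<in> sets borel" by blast
      then show "a \<inter> b \<in> {I i -` A \<inter> space M |A. A \<in> sets borel}"
        by (intro CollectI exI[of _ "A \<inter> B"]) auto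
    qed
    show "disjoint_family_on K UNIV" unfolding disjoint_family_on_def K_def by auto
  qed
  moreover have "(\<lambda>j. sigma_sets (space M) (\<Union>i\<in>K j. {I i -` A \<inter> space M | A. A \<in> sets borel}))
      = case_bool (gen_sigma M I {1..n-1}) (gen_sigma M I {n})"
    by (rule ext) (auto simp: K_def gen_sigma_def split: bool.split)
  ultimately show ?thesis unfolding indep_set_def by simp
qed

lemma comb:
  assumes J: "JA0 \<subseteq> {1..}" "JB0 \<subseteq> {1..}" "JA1 \<subseteq> {1..}" "JB1 \<subseteq> {1..}" "JA2 \<subseteq> {1..}" "JB2 \<subseteq> {1..}"
    and i0: "indep_set (gen_sigma M X JA0) (gen_sigma M X JB0)"
    and i1: "indep_set (gen_sigma M Y JA1) (gen_sigma M Y JB1)"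
    and i2: "indep_set (gen_sigma M I JA2) (gen_sigma M I JB2)"
  shows "indep_set (sigma_sets (space M) (gen_sigma M X JA0 \<union> gen_sigma M Y JA1 \<union> gen_sigma M I JA2))
                   (sigma_sets (space M) (gen_sigma M X JB0 \<union> gen_sigma M Y JB1 \<union> gen_sigma M I JB2))"
proof -
  define F where "F = (\<lambda>j::nat. if j = 0 then gen_sigma M X {1..}
                     else if j = 1 then gen_sigma M Y {1..}
                     else gen_sigma M I {1..})"
  define A where "A = (\<lambda>j::nat. if j = 0 then gen_sigma M X JA0
                     else if j = 1 then gen_sigma M Y JA1
                     else gen_sigma M I JA2)"
  define B where "B = (\<lambda>j::nat. if j = 0 then gen_sigma M X JB0
                     else if j = 1 then gen_sigma M Y JB1
                     else gen_sigma M I JB2)"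
  have "indep_set (sigma_sets (space M) (A 0 \<union> A 1 \<union> A 2)) (sigma_sets (space M) (B 0 \<union> B 1 \<union> B 2))"
  proof (rule combine3[where F=F])
    show "indep_sets F {0,1,2}" using XYI_indep unfolding F_def by simp
    show "sigma_algebra (space M) (F i)" "sigma_algebra (space M) (A i)" "sigma_algebra (space M) (B i)" for i
      unfolding F_def A_def B_def by (auto simp: gen_sigma_sa)
    show "A i \<subseteq> F i" "B i \<subseteq> F i" for i
      unfolding F_def A_def B_def using J by (auto intro!: gen_sigma_mono)
    show "indep_set (A i) (B i)" if "i \<le> 2" for i
    proof -
      have "i = 0 \<or> i = 1 \<or> i = 2" using that by auto
      then show ?thesis using i0 i1 i2 unfolding A_def B_def by auto
    qed
  qed
  then show ?thesis unfolding A_def B_def by simp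
qed

end

context ruin begin

definition Pr :: "nat \<Rightarrow> 'a \<Rightarrow> real" where "Pr n \<omega> = (\<Prod>l\<in>{1..n}. 1 + I l \<omega>)"
definition Zr :: "nat \<Rightarrow> 'a \<Rightarrow> real" where "Zr n \<omega> = Y n \<omega> / (1 + I n \<omega>) - X n \<omega>"
definition Dr :: "nat \<Rightarrow> nat \<Rightarrow> 'a \<Rightarrow> real" where
  "Dr r n \<omega> = (if n mod Suc m = r then Zr n \<omega> / Pr (n - 1) \<omega> else 0)"
definition Sr :: "nat \<Rightarrow> nat \<Rightarrow> 'a \<Rightarrow> real" where "Sr r n \<omega> = (\<Sum>l\<in>{1..n}. Dr r l \<omega>)"
definition Alr :: "nat \<Rightarrow> real \<Rightarrow> nat \<Rightarrow> 'a \<Rightarrow> real" where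
  "Alr r v n \<omega> = (\<Prod>l\<in>{..n}. if Sr r l \<omega> \<le> v then 1 else 0)"
primrec Qr :: "nat \<Rightarrow> real \<Rightarrow> nat \<Rightarrow> 'a \<Rightarrow> real" where
  "Qr r v 0 \<omega> = 1"
| "Qr r v (Suc n) \<omega> = Qr r v n \<omega> * (Alr r v n \<omega> * exp (R * Dr r (Suc n) \<omega>) + (1 - Alr r v n \<omega>))"

context
  fixes N :: "'a measure" and a b r :: nat
  assumes XN: "\<And>l. 1 \<le> l \<Longrightarrow> l \<le> a \<Longrightarrow> X l \<in> borel_measurable N"
    and YN: "\<And>l. 1 \<le> l \<Longrightarrow> l \<le> a \<Longrightarrow> Y l \<in> borel_measurable N"
    and IN: "\<And>l. 1 \<le> l \<Longrightarrow> l \<le> b \<Longrightarrow> I l \<in> borel_measurable N"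
    and ab: "\<And>l. 1 \<le> l \<Longrightarrow> l \<le> b \<Longrightarrow> l mod Suc m = r \<Longrightarrow> l \<le> a"
begin

lemma Pr_meas: "j \<le> b \<Longrightarrow> Pr j \<in> borel_measurable N"
  unfolding Pr_def by (rule borel_measurable_prod) (auto intro!: borel_measurable_add IN)

lemma Dr_meas:
  assumes l: "1 \<le> l" "l \<le> b"
  shows "Dr r l \<in> borel_measurable N"
proof (cases "l mod Suc m = r")
  case True
  have [measurable]: "X l \<in> borel_measurable N" "Y l \<in> borel_measurable N" "I l \<in> borel_measurable N"
    "Pr (l - 1) \<in> borel_measurable N"
    using XN YN IN ab[OF l True] l Pr_meas[of "l - 1"] by auto
  have eq: "Dr r l = (\<lambda>\<omega>. (Y l \<omega> / (1 + I l \<omega>) - X l \<omega>) / Pr (l - 1) \<omega>)"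
    unfolding Dr_def Zr_def using True by (intro ext) simp
  show ?thesis unfolding eq by measurable
next
  case False
  then show ?thesis unfolding Dr_def by simp
qed

lemma Sr_meas: "l \<le> b \<Longrightarrow> Sr r l \<in> borel_measurable N"
  unfolding Sr_def by (rule borel_measurable_sum) (auto intro: Dr_meas)

lemma Alr_meas: "l \<le> b \<Longrightarrow> Alr r v l \<in> borel_measurable N"
  unfolding Alr_def
proof (rule borel_measurable_prod)
  fix j assume "l \<le> b" "j \<in> {..l}"
  then have [measurable]: "Sr r j \<in> borel_measurable N" by (intro Sr_meas) auto
  show "(\<lambda>\<omega>. if Sr r j \<omega> \<le> v then 1 else 0 :: real) \<in> borel_measurable N" by measurable
qed

lemma Qr_meas: "l \<le> b \<Longrightarrow> Qr r v l \<in> borel_measurable N"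
proof (induction l)
  case 0
  then show ?case by simp
next
  case (Suc l)
  have [measurable]: "Qr r v l \<in> borel_measurable N" "Alr r v l \<in> borel_measurable N"
    "Dr r (Suc l) \<in> borel_measurable N"
    using Suc Alr_meas Dr_meas by auto
  show ?case by simp
qed

end

lemma measM:
  shows "Qr r v n \<in> borel_measurable M" "Alr r v n \<in> borel_measurable M"
    "Pr n \<in> borel_measurable M" "Sr r n \<in> borel_measurable M"
  by (rule Qr_meas[where a=n and b=n] Alr_meas[where a=n and b=n] Pr_meas[where a=n and b=n]
        Sr_meas[where a=n and b=n]; auto intro: X_rv Y_rv I_rv)+

lemma Sr_0[simp]: "Sr r 0 \<omega> = 0" unfolding Sr_def by simp

lemma Sr_Suc: "Sr r (Suc n) \<omega> = Sr r n \<omega> + Dr r (Suc n) \<omega>" unfolding Sr_def by simp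

lemma Alr_eq: "Alr r v n \<omega> = (if \<forall>l\<le>n. Sr r l \<omega> \<le> v then 1 else 0)"
proof (induction n)
  case 0 then show ?case unfolding Alr_def by simp
next
  case (Suc n)
  have "Alr r v (Suc n) \<omega> = Alr r v n \<omega> * (if Sr r (Suc n) \<omega> \<le> v then 1 else 0)"
    unfolding Alr_def by (simp add: atMost_Suc mult.commute)
  then show ?case using Suc by (auto simp: le_Suc_eq)
qed

lemma Qr_nonneg: "Qr r v n \<omega> \<ge> 0"
  by (induction n) (auto simp: Alr_eq)

lemma Qr_alive: "Alr r v n \<omega> = 1 \<Longrightarrow> Qr r v n \<omega> = exp (R * Sr r n \<omega>)"
proof (induction n)
  case 0 then show ?case by simp
next
  case (Suc n)
  then have "Alr r v n \<omega> = 1" by (auto simp: Alr_eq split: if_splits)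
  with Suc show ?case by (simp add: Sr_Suc distrib_left exp_add)
qed

lemma Qr_dead: "Alr r v n \<omega> = 0 \<Longrightarrow> Qr r v n \<omega> \<ge> exp (R * v)"
proof (induction n)
  case 0
  then have "v < 0" by (auto simp: Alr_eq split: if_splits)
  then have "R * v < 0" using R_pos by (simp add: mult_pos_neg)
  then show ?case by simp
next
  case (Suc n)
  show ?case
  proof (cases "Alr r v n \<omega> = 1")
    case True
    then have all: "\<forall>l\<le>n. Sr r l \<omega> \<le> v" by (auto simp: Alr_eq split: if_splits)
    from Suc.prems have "\<not> (\<forall>l\<le>Suc n. Sr r l \<omega> \<le> v)" by (auto simp: Alr_eq split: if_splits)
    with all have "Sr r (Suc n) \<omega> > v" by (auto simp: le_Suc_eq)
    then have "R * v \<le> R * Sr r (Suc n) \<omega>" using R_pos by simp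
    moreover have "Qr r v (Suc n) \<omega> = exp (R * Sr r (Suc n) \<omega>)"
      using Qr_alive[OF True] True by (simp add: Sr_Suc distrib_left exp_add)
    ultimately show ?thesis by simp
  next
    case False
    then have "Alr r v n \<omega> = 0" by (auto simp: Alr_eq split: if_splits)
    with Suc show ?thesis by simp
  qed
qed

lemma mod_le: "1 \<le> l \<Longrightarrow> l < k \<Longrightarrow> l mod Suc m = k mod Suc m \<Longrightarrow> l \<le> k - Suc m"
proof -
  assume a: "1 \<le> l" "l < k" "l mod Suc m = k mod Suc m"
  then have "Suc m dvd k - l" using mod_eq_dvd_iff_nat[of l k "Suc m"] by simp
  then have "Suc m \<le> k - l" using a by (intro dvd_imp_le) auto
  then show ?thesis by simp
qed

lemma Pr_ge1: "\<omega> \<in> space M \<Longrightarrow> Pr n \<omega> \<ge> 1"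
  unfolding Pr_def by (rule prod_ge_1) (auto intro: I_nonneg)

lemma meas_gen: "i \<in> J \<Longrightarrow> G \<subseteq> Pow (space M) \<Longrightarrow> gen_sigma M Z J \<subseteq> G \<Longrightarrow> Z i \<in> borel_measurable (sigma (space M) G)"
  by (rule meas_sigma) (auto intro: vs_sub)

lemma gen3_Pow: "gen_sigma M X J0 \<union> gen_sigma M Y J1 \<union> gen_sigma M I J2 \<subseteq> Pow (space M)"
  using gen_Pow by blast

lemma ev_X: "J \<subseteq> {1..} \<Longrightarrow> gen_sigma M X J \<subseteq> events" by (rule gen_ev) (auto intro: X_rv)
lemma ev_Y: "J \<subseteq> {1..} \<Longrightarrow> gen_sigma M Y J \<subseteq> events" by (rule gen_ev) (auto intro: Y_rv)
lemma ev_I: "J \<subseteq> {1..} \<Longrightarrow> gen_sigma M I J \<subseteq> events" by (rule gen_ev) (auto intro: I_rv)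

lemma indep_X_YI:
  assumes k: "k \<ge> 1"
  shows "distr M borel (X k) \<Otimes>\<^sub>M distr M (borel \<Otimes>\<^sub>M borel) (\<lambda>\<omega>. (Y k \<omega>, I k \<omega>))
      = distr M (borel \<Otimes>\<^sub>M (borel \<Otimes>\<^sub>M borel)) (\<lambda>\<omega>. (X k \<omega>, Y k \<omega>, I k \<omega>))"
proof -
  let ?GA = "gen_sigma M X {k} \<union> gen_sigma M Y {} \<union> gen_sigma M I {}"
  let ?GB = "gen_sigma M X {} \<union> gen_sigma M Y {k} \<union> gen_sigma M I {k}"
  have "indep_set (sigma_sets (space M) ?GA) (sigma_sets (space M) ?GB)"
  proof (rule comb)
    show "indep_set (gen_sigma M X {k}) (gen_sigma M X {})"
      by (rule indep_set_sym, rule triv_gen, rule ev_X) (use k in auto)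
    show "indep_set (gen_sigma M Y {}) (gen_sigma M Y {k})"
      by (rule triv_gen, rule ev_Y) (use k in auto)
    show "indep_set (gen_sigma M I {}) (gen_sigma M I {k})"
      by (rule triv_gen, rule ev_I) (use k in auto)
  qed (use k in auto)
  then show ?thesis
  proof (rule indep_gen_distr[OF _ gen3_Pow gen3_Pow])
    show "X k \<in> borel_measurable (sigma (space M) ?GA)"
      by (rule meas_gen[OF _ gen3_Pow]) auto
    show "(\<lambda>\<omega>. (Y k \<omega>, I k \<omega>)) \<in> measurable (sigma (space M) ?GB) (borel \<Otimes>\<^sub>M borel)"
      by (rule measurable_Pair; rule meas_gen[OF _ gen3_Pow]) auto
    show "X k \<in> borel_measurable M" using k X_rv by auto
    show "(\<lambda>\<omega>. (Y k \<omega>, I k \<omega>)) \<in> measurable M (borel \<Otimes>\<^sub>M borel)"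
      using k Y_rv I_rv by (auto intro!: measurable_Pair)
  qed
qed

lemma indep_Y_I:
  assumes k: "k \<ge> 1"
  shows "distr M borel (Y k) \<Otimes>\<^sub>M distr M borel (I k) = distr M (borel \<Otimes>\<^sub>M borel) (\<lambda>\<omega>. (Y k \<omega>, I k \<omega>))"
proof -
  let ?GA = "gen_sigma M X {} \<union> gen_sigma M Y {k} \<union> gen_sigma M I {}"
  let ?GB = "gen_sigma M X {} \<union> gen_sigma M Y {} \<union> gen_sigma M I {k}"
  have "indep_set (sigma_sets (space M) ?GA) (sigma_sets (space M) ?GB)"
  proof (rule comb)
    show "indep_set (gen_sigma M X {}) (gen_sigma M X {})"
      by (rule triv_gen, rule ev_X) auto
    show "indep_set (gen_sigma M Y {k}) (gen_sigma M Y {})"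
      by (rule indep_set_sym, rule triv_gen, rule ev_Y) (use k in auto)
    show "indep_set (gen_sigma M I {}) (gen_sigma M I {k})"
      by (rule triv_gen, rule ev_I) (use k in auto)
  qed (use k in auto)
  then show ?thesis
  proof (rule indep_gen_distr[OF _ gen3_Pow gen3_Pow])
    show "Y k \<in> borel_measurable (sigma (space M) ?GA)"
      by (rule meas_gen[OF _ gen3_Pow]) auto
    show "I k \<in> borel_measurable (sigma (space M) ?GB)"
      by (rule meas_gen[OF _ gen3_Pow]) auto
    show "Y k \<in> borel_measurable M" using k Y_rv by auto
    show "I k \<in> borel_measurable M" using k I_rv by auto
  qed
qed

lemma distr_U:
  assumes k: "k \<ge> 1"
  shows "distr M (borel \<Otimes>\<^sub>M (borel \<Otimes>\<^sub>M borel)) (\<lambda>\<omega>. (X k \<omega>, Y k \<omega>, I k \<omega>))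
       = distr M borel (X 1) \<Otimes>\<^sub>M (distr M borel (Y 1) \<Otimes>\<^sub>M distr M borel (I 1))"
proof -
  have e1: "distr M borel (X k) \<Otimes>\<^sub>M distr M (borel \<Otimes>\<^sub>M borel) (\<lambda>\<omega>. (Y k \<omega>, I k \<omega>))
      = distr M (borel \<Otimes>\<^sub>M (borel \<Otimes>\<^sub>M borel)) (\<lambda>\<omega>. (X k \<omega>, Y k \<omega>, I k \<omega>))"
    using indep_X_YI[OF k] .
  have e2: "distr M borel (Y k) \<Otimes>\<^sub>M distr M borel (I k) = distr M (borel \<Otimes>\<^sub>M borel) (\<lambda>\<omega>. (Y k \<omega>, I k \<omega>))"
    using indep_Y_I[OF k] .
  have "distr M borel (X k) = distr M borel (X 1)" using X_id k unfolding ident_distr_def by blast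
  moreover have "distr M borel (Y k) = distr M borel (Y 1)" using Y_id k unfolding ident_distr_def by blast
  moreover have "distr M borel (I k) = distr M borel (I 1)" using I_id k unfolding ident_distr_def by blast
  ultimately show ?thesis by (simp only: e1[symmetric] e2[symmetric])
qed

lemma int_U:
  assumes k: "k \<ge> 1" and f: "f \<in> borel_measurable (borel \<Otimes>\<^sub>M (borel \<Otimes>\<^sub>M borel))"
  shows "(\<integral>\<^sup>+\<omega>. f (X k \<omega>, Y k \<omega>, I k \<omega>) \<partial>M) = (\<integral>\<^sup>+\<omega>. f (X 1 \<omega>, Y 1 \<omega>, I 1 \<omega>) \<partial>M)"
proof -
  have m: "(\<lambda>\<omega>. (X j \<omega>, Y j \<omega>, I j \<omega>)) \<in> measurable M (borel \<Otimes>\<^sub>M (borel \<Otimes>\<^sub>M borel))" if "j \<ge> 1" for j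
    using that X_rv Y_rv I_rv by (auto intro!: measurable_Pair)
  have "(\<integral>\<^sup>+\<omega>. f (X k \<omega>, Y k \<omega>, I k \<omega>) \<partial>M)
      = (\<integral>\<^sup>+t. f t \<partial>(distr M (borel \<Otimes>\<^sub>M (borel \<Otimes>\<^sub>M borel)) (\<lambda>\<omega>. (X k \<omega>, Y k \<omega>, I k \<omega>))))"
    by (subst nn_integral_distr) (use m[OF k] f in auto)
  also have "\<dots> = (\<integral>\<^sup>+t. f t \<partial>(distr M (borel \<Otimes>\<^sub>M (borel \<Otimes>\<^sub>M borel)) (\<lambda>\<omega>. (X 1 \<omega>, Y 1 \<omega>, I 1 \<omega>))))"
    using distr_U[OF k] distr_U[of 1] by simp
  also have "\<dots> = (\<integral>\<^sup>+\<omega>. f (X 1 \<omega>, Y 1 \<omega>, I 1 \<omega>) \<partial>M)"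
    by (subst nn_integral_distr) (use m f in auto)
  finally show ?thesis .
qed

lemma exp_Z:
  assumes k: "k \<ge> 1" and p: "p \<ge> 1"
  shows "(\<integral>\<^sup>+\<omega>. ennreal (exp (R * (Zr k \<omega> / p))) \<partial>M) \<le> 1"
proof -
  let ?f = "\<lambda>t::real \<times> real \<times> real. ennreal (exp (R * ((fst (snd t) / (1 + snd (snd t)) - fst t) / p)))"
  have fm: "?f \<in> borel_measurable (borel \<Otimes>\<^sub>M (borel \<Otimes>\<^sub>M borel))" by measurable
  have "(\<integral>\<^sup>+\<omega>. ennreal (exp (R * (Zr k \<omega> / p))) \<partial>M) = (\<integral>\<^sup>+\<omega>. ?f (X k \<omega>, Y k \<omega>, I k \<omega>) \<partial>M)"
    by (simp add: Zr_def)
  also have "\<dots> = (\<integral>\<^sup>+\<omega>. ?f (X 1 \<omega>, Y 1 \<omega>, I 1 \<omega>) \<partial>M)" by (rule int_U[OF k fm])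
  also have "\<dots> \<le> (\<integral>\<^sup>+\<omega>. ennreal (1 - 1/p) + ennreal (1/p) * ennreal (exp (R * (Y 1 \<omega> / (1 + I 1 \<omega>) - X 1 \<omega>))) \<partial>M)"
  proof (rule nn_integral_mono)
    fix \<omega>
    let ?z = "R * (Y 1 \<omega> / (1 + I 1 \<omega>) - X 1 \<omega>)"
    have c: "exp ((1 - 1/p) *\<^sub>R 0 + (1/p) *\<^sub>R ?z) \<le> (1 - 1/p) * exp 0 + (1/p) * exp ?z"
      by (rule convex_onD[OF exp_convex]) (use p in auto)
    have "R * ((Y 1 \<omega> / (1 + I 1 \<omega>) - X 1 \<omega>) / p) = (1 - 1/p) *\<^sub>R 0 + (1/p) *\<^sub>R ?z" by simp
    with c have "exp (R * ((Y 1 \<omega> / (1 + I 1 \<omega>) - X 1 \<omega>) / p)) \<le> (1 - 1/p) + (1/p) * exp ?z" by simp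
    moreover have "0 \<le> 1 - 1/p" "0 \<le> 1/p" using p by auto
    ultimately show "?f (X 1 \<omega>, Y 1 \<omega>, I 1 \<omega>) \<le> ennreal (1 - 1/p) + ennreal (1/p) * ennreal (exp ?z)"
      by (simp add: ennreal_mult[symmetric] ennreal_plus[symmetric] del: ennreal_plus)
  qed
  also have "\<dots> = ennreal (1 - 1/p) + ennreal (1/p) * (\<integral>\<^sup>+\<omega>. ennreal (exp (R * (Y 1 \<omega> / (1 + I 1 \<omega>) - X 1 \<omega>))) \<partial>M)"
    using X_rv[of 1] Y_rv[of 1] I_rv[of 1]
    by (subst nn_integral_add) (auto simp: nn_integral_cmult emeasure_space_1)
  also have "\<dots> \<le> ennreal (1 - 1/p) + ennreal (1/p) * 1"
    by (intro add_mono mult_left_mono R_lund) auto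
  also have "\<dots> = 1" using p by (simp add: ennreal_plus[symmetric] del: ennreal_plus)
  finally show ?thesis .
qed

lemma Alr_01: "Alr r v n \<omega> = 0 \<or> Alr r v n \<omega> = 1"
  by (simp add: Alr_eq)

lemma Qr_int: "(\<integral>\<^sup>+\<omega>. ennreal (Qr r v n \<omega>) \<partial>M) \<le> 1"
proof (induction n)
  case 0 then show ?case by (simp add: emeasure_space_1)
next
  case (Suc n)
  define k where "k = Suc n"
  have k1: "k \<ge> 1" and kn: "k - 1 = n" by (auto simp: k_def)
  show ?case
  proof (cases "k mod Suc m = r")
    case False
    have D0: "Dr r (Suc n) \<omega> = 0" for \<omega> using False by (simp add: Dr_def k_def)
    have eqQ: "Qr r v (Suc n) \<omega> = Qr r v n \<omega>" for \<omega> by (simp add: D0 algebra_simps)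
    show ?thesis using Suc.IH unfolding eqQ .
  next
    case True
    let ?GA = "gen_sigma M X {1..k - Suc m} \<union> gen_sigma M Y {1..k - Suc m} \<union> gen_sigma M I {1..k-1}"
    let ?GB = "gen_sigma M X {k} \<union> gen_sigma M Y {k} \<union> gen_sigma M I {k}"
    let ?N = "sigma (space M) ?GA"
    have ind: "indep_set (sigma_sets (space M) ?GA) (sigma_sets (space M) ?GB)"
    proof (rule comb)
      show "indep_set (gen_sigma M X {1..k - Suc m}) (gen_sigma M X {k})"
        by (rule mdep_indep[OF X_mdep X_rv k1])
      show "indep_set (gen_sigma M Y {1..k - Suc m}) (gen_sigma M Y {k})"
        by (rule mdep_indep[OF Y_mdep Y_rv k1])
      show "indep_set (gen_sigma M I {1..k - 1}) (gen_sigma M I {k})"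
        by (rule I_indep_set[OF k1])
    qed (use k1 in auto)
    have XN: "X l \<in> borel_measurable ?N" if "1 \<le> l" "l \<le> k - Suc m" for l
      by (rule meas_gen[where J="{1..k - Suc m}", OF _ gen3_Pow]) (use that in auto)
    have YN: "Y l \<in> borel_measurable ?N" if "1 \<le> l" "l \<le> k - Suc m" for l
      by (rule meas_gen[where J="{1..k - Suc m}", OF _ gen3_Pow]) (use that in auto)
    have IN: "I l \<in> borel_measurable ?N" if "1 \<le> l" "l \<le> n" for l
      by (rule meas_gen[where J="{1..k - 1}", OF _ gen3_Pow]) (use that kn in auto)
    have ab: "l \<le> k - Suc m" if "1 \<le> l" "l \<le> n" "l mod Suc m = r" for l
      using mod_le[of l k] that True by (auto simp: k_def)
    have [measurable]: "Qr r v n \<in> borel_measurable ?N" "Alr r v n \<in> borel_measurable ?N"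
        "Pr n \<in> borel_measurable ?N"
      by (rule Qr_meas Alr_meas Pr_meas; (rule XN YN IN ab; assumption)?; simp)+
    have [measurable]: "Qr r v n \<in> borel_measurable M" "Alr r v n \<in> borel_measurable M"
        "Pr n \<in> borel_measurable M"
      by (rule measM)+
    have [measurable]: "X k \<in> borel_measurable M" "Y k \<in> borel_measurable M" "I k \<in> borel_measurable M"
      using k1 X_rv Y_rv I_rv by auto
    define V where "V = (\<lambda>\<omega>. (Qr r v n \<omega> * Alr r v n \<omega>, Pr n \<omega>))"
    define U where "U = (\<lambda>\<omega>. (X k \<omega>, Y k \<omega>, I k \<omega>))"
    have VN: "V \<in> measurable ?N (borel \<Otimes>\<^sub>M borel)" unfolding V_def by measurable
    have UN: "U \<in> measurable (sigma (space M) ?GB) (borel \<Otimes>\<^sub>M (borel \<Otimes>\<^sub>M borel))"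
      unfolding U_def by (intro measurable_Pair meas_gen[OF _ gen3_Pow]) auto
    have VM: "V \<in> measurable M (borel \<Otimes>\<^sub>M borel)" unfolding V_def by measurable
    have UM: "U \<in> measurable M (borel \<Otimes>\<^sub>M (borel \<Otimes>\<^sub>M borel))" unfolding U_def by measurable
    have eq: "distr M (borel \<Otimes>\<^sub>M borel) V \<Otimes>\<^sub>M distr M (borel \<Otimes>\<^sub>M (borel \<Otimes>\<^sub>M borel)) U
        = distr M ((borel \<Otimes>\<^sub>M borel) \<Otimes>\<^sub>M (borel \<Otimes>\<^sub>M (borel \<Otimes>\<^sub>M borel))) (\<lambda>x. (V x, U x))"
      by (rule indep_gen_distr[OF ind gen3_Pow gen3_Pow VN UN VM UM])
    define F :: "(real \<times> real) \<times> (real \<times> real \<times> real) \<Rightarrow> ennreal" where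
      "F = (\<lambda>t. ennreal (fst (fst t) * exp (R * ((fst (snd (snd t)) / (1 + snd (snd (snd t))) - fst (snd t)) / max 1 (snd (fst t))))))"
    have Fm: "F \<in> borel_measurable ((borel \<Otimes>\<^sub>M borel) \<Otimes>\<^sub>M (borel \<Otimes>\<^sub>M (borel \<Otimes>\<^sub>M borel)))"
      unfolding F_def by measurable
    have bound: "(\<integral>\<^sup>+\<omega>. F (V \<omega>, U \<omega>) \<partial>M) \<le> (\<integral>\<^sup>+\<omega>. ennreal (fst (V \<omega>)) \<partial>M)"
    proof (rule indep_bound[OF VM UM eq Fm])
      show "(\<lambda>vv. ennreal (fst vv)) \<in> borel_measurable (borel \<Otimes>\<^sub>M borel)" by measurable
      fix vv :: "real \<times> real"
      obtain g p where vv: "vv = (g, p)" by (cases vv)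
      show "(\<integral>\<^sup>+\<omega>. F (vv, U \<omega>) \<partial>M) \<le> ennreal (fst vv)"
      proof (cases "g \<le> 0")
        case True
        have "F (vv, U \<omega>) = 0" for \<omega>
          unfolding F_def vv using True by (intro ennreal_neg) (simp add: mult_nonpos_nonneg)
        then show ?thesis by simp
      next
        case False
        have "(\<integral>\<^sup>+\<omega>. F (vv, U \<omega>) \<partial>M) = (\<integral>\<^sup>+\<omega>. ennreal g * ennreal (exp (R * (Zr k \<omega> / max 1 p))) \<partial>M)"
          unfolding F_def vv U_def Zr_def using False by (simp add: ennreal_mult)
        also have "\<dots> = ennreal g * (\<integral>\<^sup>+\<omega>. ennreal (exp (R * (Zr k \<omega> / max 1 p))) \<partial>M)"
          unfolding Zr_def by (rule nn_integral_cmult) measurable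
        also have "\<dots> \<le> ennreal g * 1"
          by (intro mult_left_mono exp_Z[OF k1]) auto
        finally show ?thesis using vv by simp
      qed
    qed
    have pw1: "ennreal (Qr r v (Suc n) \<omega>) = F (V \<omega>, U \<omega>) + ennreal (Qr r v n \<omega> * (1 - Alr r v n \<omega>))"
      if \<omega>: "\<omega> \<in> space M" for \<omega>
    proof -
      have Q0: "Qr r v n \<omega> \<ge> 0" by (rule Qr_nonneg)
      have A01: "Alr r v n \<omega> = 0 \<or> Alr r v n \<omega> = 1" by (rule Alr_01)
      have mx: "max 1 (Pr n \<omega>) = Pr n \<omega>" using Pr_ge1[OF \<omega>] by simp
      have Dk: "Dr r (Suc n) \<omega> = Zr k \<omega> / Pr n \<omega>" using True by (simp add: Dr_def k_def)
      have "Qr r v (Suc n) \<omega> = (Qr r v n \<omega> * Alr r v n \<omega>) * exp (R * (Zr k \<omega> / Pr n \<omega>))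
          + Qr r v n \<omega> * (1 - Alr r v n \<omega>)"
        by (simp add: Dk algebra_simps)
      moreover have "F (V \<omega>, U \<omega>) = ennreal ((Qr r v n \<omega> * Alr r v n \<omega>) * exp (R * (Zr k \<omega> / Pr n \<omega>)))"
        unfolding F_def V_def U_def Zr_def using mx by simp
      moreover have "0 \<le> (Qr r v n \<omega> * Alr r v n \<omega>) * exp (R * (Zr k \<omega> / Pr n \<omega>))"
        using Q0 A01 by auto
      moreover have "0 \<le> Qr r v n \<omega> * (1 - Alr r v n \<omega>)" using Q0 A01 by auto
      ultimately show ?thesis by (simp add: ennreal_plus)
    qed
    have pw2: "ennreal (Qr r v n \<omega>) = ennreal (fst (V \<omega>)) + ennreal (Qr r v n \<omega> * (1 - Alr r v n \<omega>))" for \<omega>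
    proof -
      have Q0: "Qr r v n \<omega> \<ge> 0" by (rule Qr_nonneg)
      have A01: "Alr r v n \<omega> = 0 \<or> Alr r v n \<omega> = 1" by (rule Alr_01)
      have "0 \<le> Qr r v n \<omega> * Alr r v n \<omega>" "0 \<le> Qr r v n \<omega> * (1 - Alr r v n \<omega>)" using Q0 A01 by auto
      then have "ennreal (Qr r v n \<omega> * Alr r v n \<omega>) + ennreal (Qr r v n \<omega> * (1 - Alr r v n \<omega>))
          = ennreal (Qr r v n \<omega> * Alr r v n \<omega> + Qr r v n \<omega> * (1 - Alr r v n \<omega>))"
        by (simp add: ennreal_plus)
      also have "\<dots> = ennreal (Qr r v n \<omega>)" by (simp add: algebra_simps)
      finally show ?thesis unfolding V_def by simp
    qed
    have FVU: "(\<lambda>\<omega>. F (V \<omega>, U \<omega>)) \<in> borel_measurable M"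
      using Fm VM UM by measurable
    have "(\<integral>\<^sup>+\<omega>. ennreal (Qr r v (Suc n) \<omega>) \<partial>M)
        = (\<integral>\<^sup>+\<omega>. F (V \<omega>, U \<omega>) + ennreal (Qr r v n \<omega> * (1 - Alr r v n \<omega>)) \<partial>M)"
      by (rule nn_integral_cong) (rule pw1)
    also have "\<dots> = (\<integral>\<^sup>+\<omega>. F (V \<omega>, U \<omega>) \<partial>M) + (\<integral>\<^sup>+\<omega>. ennreal (Qr r v n \<omega> * (1 - Alr r v n \<omega>)) \<partial>M)"
      by (rule nn_integral_add) (use FVU in measurable)
    also have "\<dots> \<le> (\<integral>\<^sup>+\<omega>. ennreal (fst (V \<omega>)) \<partial>M) + (\<integral>\<^sup>+\<omega>. ennreal (Qr r v n \<omega> * (1 - Alr r v n \<omega>)) \<partial>M)"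
      by (rule add_right_mono[OF bound])
    also have "\<dots> = (\<integral>\<^sup>+\<omega>. ennreal (fst (V \<omega>)) + ennreal (Qr r v n \<omega> * (1 - Alr r v n \<omega>)) \<partial>M)"
      by (rule nn_integral_add[symmetric]) (unfold V_def, measurable)
    also have "\<dots> = (\<integral>\<^sup>+\<omega>. ennreal (Qr r v n \<omega>) \<partial>M)"
      by (simp add: pw2)
    also have "\<dots> \<le> 1" by (rule Suc.IH)
    finally show ?thesis .
  qed
qed

lemma max_ineq: "measure M {\<omega> \<in> space M. Alr r v n \<omega> \<noteq> 1} \<le> exp (- R * v)"
proof -
  define E where "E = {\<omega> \<in> space M. Alr r v n \<omega> \<noteq> 1}"
  have [measurable]: "Alr r v n \<in> borel_measurable M" "Qr r v n \<in> borel_measurable M" by (rule measM)+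
  have E: "E \<in> sets M" unfolding E_def by measurable
  have "ennreal (exp (R * v)) * emeasure M E = (\<integral>\<^sup>+ x. ennreal (exp (R * v)) * indicator E x \<partial>M)"
    by (rule nn_integral_cmult_indicator[OF E, symmetric])
  also have "\<dots> \<le> (\<integral>\<^sup>+\<omega>. ennreal (Qr r v n \<omega>) \<partial>M)"
  proof (rule nn_integral_mono)
    fix \<omega> assume "\<omega> \<in> space M"
    show "ennreal (exp (R * v)) * indicator E \<omega> \<le> ennreal (Qr r v n \<omega>)"
    proof (cases "\<omega> \<in> E")
      case True
      then have "Alr r v n \<omega> = 0" using Alr_01[of r v n \<omega>] by (auto simp: E_def)
      then have "exp (R * v) \<le> Qr r v n \<omega>" by (rule Qr_dead)
      then show ?thesis using True by (simp add: ennreal_leI)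
    next
      case False
      then show ?thesis by simp
    qed
  qed
  also have "\<dots> \<le> 1" by (rule Qr_int)
  finally have "ennreal (exp (R * v)) * ennreal (measure M E) \<le> 1" by (simp add: emeasure_eq_measure)
  then have "ennreal (exp (R * v) * measure M E) \<le> 1" by (simp add: ennreal_mult)
  then have "exp (R * v) * measure M E \<le> 1" by (simp add: ennreal_le_1)
  then have "measure M E \<le> 1 / exp (R * v)" by (simp add: pos_le_divide_eq mult.commute)
  then show ?thesis by (simp add: exp_minus inverse_eq_divide E_def)
qed

lemma surplus_eq:
  assumes \<omega>: "\<omega> \<in> space M"
  shows "surplus u X Y I n \<omega> = Pr n \<omega> * (u - (\<Sum>l\<in>{1..n}. Zr l \<omega> / Pr (l - 1) \<omega>))"
proof (induction n)
  case 0 then show ?case by (simp add: Pr_def)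
next
  case (Suc n)
  have I0: "1 + I (Suc n) \<omega> > 0" using I_nonneg[of "Suc n" \<omega>] \<omega> by simp
  have P0: "Pr n \<omega> > 0" using Pr_ge1[OF \<omega>, of n] by simp
  have PS: "Pr (Suc n) \<omega> = Pr n \<omega> * (1 + I (Suc n) \<omega>)" unfolding Pr_def by (simp add: mult.commute)
  have "surplus u X Y I (Suc n) \<omega> = (Pr n \<omega> * (u - (\<Sum>l\<in>{1..n}. Zr l \<omega> / Pr (l - 1) \<omega>)) + X (Suc n) \<omega>) * (1 + I (Suc n) \<omega>) - Y (Suc n) \<omega>"
    using Suc by simp
  also have "\<dots> = Pr (Suc n) \<omega> * (u - ((\<Sum>l\<in>{1..n}. Zr l \<omega> / Pr (l - 1) \<omega>) + Zr (Suc n) \<omega> / Pr n \<omega>))"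
  proof -
    define a where "a = Pr n \<omega>"
    define J where "J = 1 + I (Suc n) \<omega>"
    define S where "S = (\<Sum>l\<in>{1..n}. Zr l \<omega> / Pr (l - 1) \<omega>)"
    define x where "x = X (Suc n) \<omega>"
    define y where "y = Y (Suc n) \<omega>"
    have a0: "a \<noteq> 0" and J0: "J \<noteq> 0" using I0 P0 by (auto simp: a_def J_def)
    have d: "\<And>q. (a * J) * (u - (S + q)) = (a * J) * (u - S) - (a * J) * q" by (simp add: algebra_simps)
    have e1: "(a * J) * ((y / J - x) / a) = (y / J - x) * J" using a0 by simp
    have e2: "(y / J - x) * J = y - x * J" using J0 by (simp add: left_diff_distrib)
    have "(a * (u - S) + x) * J - y = (a * J) * (u - (S + (y / J - x) / a))"
      unfolding d e1 e2 by (simp add: algebra_simps)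
    then show ?thesis unfolding PS Zr_def a_def J_def S_def x_def y_def .
  qed
  also have "(\<Sum>l\<in>{1..n}. Zr l \<omega> / Pr (l - 1) \<omega>) + Zr (Suc n) \<omega> / Pr n \<omega> = (\<Sum>l\<in>{1..Suc n}. Zr l \<omega> / Pr (l - 1) \<omega>)"
    by simp
  finally show ?case .
qed

lemma sum_swap_S: "(\<Sum>l\<in>{1..n}. Zr l \<omega> / Pr (l - 1) \<omega>) = (\<Sum>r<Suc m. Sr r n \<omega>)"
proof -
  have "(\<Sum>r<Suc m. Sr r n \<omega>) = (\<Sum>l\<in>{1..n}. \<Sum>r<Suc m. Dr r l \<omega>)"
    unfolding Sr_def by (rule sum.swap)
  also have "\<dots> = (\<Sum>l\<in>{1..n}. Zr l \<omega> / Pr (l - 1) \<omega>)"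
    unfolding Dr_def by (rule sum.cong) (auto simp: sum.delta' simp del: sum.lessThan_Suc)
  finally show ?thesis by simp
qed

lemma union_bound:
  fixes v :: real
  shows "measure M (\<Union>r\<in>{..<Suc m}. \<Union>N. {\<omega> \<in> space M. Alr r v N \<omega> \<noteq> 1}) \<le> real (Suc m) * exp (- R * v)"
proof -
  let ?E = "\<lambda>r N. {\<omega> \<in> space M. Alr r v N \<omega> \<noteq> 1}"
  have Eev: "?E r N \<in> sets M" for r N
  proof -
    have [measurable]: "Alr r v N \<in> borel_measurable M" by (rule measM)
    show ?thesis by measurable
  qed
  have each: "measure M (\<Union>N. ?E r N) \<le> exp (- R * v)" for r
  proof -
    have inc: "incseq (?E r)"
    proof (rule incseq_SucI)
      fix N show "?E r N \<subseteq> ?E r (Suc N)"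
      proof
        fix \<omega> assume "\<omega> \<in> ?E r N"
        then have "\<omega> \<in> space M" "\<not> (\<forall>l\<le>N. Sr r l \<omega> \<le> v)" by (auto simp: Alr_eq split: if_splits)
        then obtain l where "l \<le> N" "\<not> Sr r l \<omega> \<le> v" "\<omega> \<in> space M" by auto
        then have "\<not> (\<forall>l\<le>Suc N. Sr r l \<omega> \<le> v)" "\<omega> \<in> space M" by (blast intro: le_SucI)+
        then show "\<omega> \<in> ?E r (Suc N)" by (simp add: Alr_eq)
      qed
    qed
    have "(\<lambda>N. measure M (?E r N)) \<longlonglongrightarrow> measure M (\<Union>N. ?E r N)"
      by (rule finite_Lim_measure_incseq) (use Eev inc in auto)
    then show ?thesis by (rule LIMSEQ_le_const2) (use max_ineq in auto)
  qed
  have "measure M (\<Union>r\<in>{..<Suc m}. \<Union>N. ?E r N) \<le> (\<Sum>r<Suc m. measure M (\<Union>N. ?E r N))"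
    by (rule finite_measure_subadditive_finite) (use Eev in auto)
  also have "\<dots> \<le> (\<Sum>r<Suc m. exp (- R * v))" by (rule sum_mono) (rule each)
  also have "\<dots> = real (Suc m) * exp (- R * v)" by simp
  finally show ?thesis .
qed

lemma main:
  "measure M (\<Union>n\<in>{1..}. {\<omega>\<in>space M. surplus u X Y I n \<omega> < 0}) \<le> (real m + 1) * exp (- R * u / (real m + 1))"
proof -
  define v where "v = u / (real m + 1)"
  let ?E = "\<lambda>r N. {\<omega> \<in> space M. Alr r v N \<omega> \<noteq> 1}"
  have Eev: "?E r N \<in> sets M" for r N
  proof -
    have [measurable]: "Alr r v N \<in> borel_measurable M" by (rule measM)
    show ?thesis by measurable
  qed
  have sub: "(\<Union>n\<in>{1..}. {\<omega>\<in>space M. surplus u X Y I n \<omega> < 0}) \<subseteq> (\<Union>r\<in>{..<Suc m}. \<Union>N. ?E r N)"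
  proof
    fix \<omega> assume "\<omega> \<in> (\<Union>n\<in>{1..}. {\<omega>\<in>space M. surplus u X Y I n \<omega> < 0})"
    then obtain n where \<omega>: "\<omega> \<in> space M" and neg: "surplus u X Y I n \<omega> < 0" by auto
    have P0: "Pr n \<omega> > 0" using Pr_ge1[OF \<omega>, of n] by simp
    from neg have "u < (\<Sum>l\<in>{1..n}. Zr l \<omega> / Pr (l - 1) \<omega>)"
      unfolding surplus_eq[OF \<omega>] using P0 by (simp add: mult_less_0_iff)
    then have gt: "u < (\<Sum>r<Suc m. Sr r n \<omega>)" by (simp only: sum_swap_S)
    have "\<exists>r<Suc m. Sr r n \<omega> > v"
    proof (rule ccontr)
      assume "\<not> ?thesis"
      then have "\<And>r. r \<in> {..<Suc m} \<Longrightarrow> Sr r n \<omega> \<le> v" by auto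
      then have "(\<Sum>r<Suc m. Sr r n \<omega>) \<le> of_nat (card {..<Suc m}) * v" by (rule sum_bounded_above)
      also have "\<dots> = u" unfolding v_def by (simp add: field_simps add.commute)
      finally show False using gt by simp
    qed
    then obtain r where r: "r < Suc m" "Sr r n \<omega> > v" by blast
    then have "Alr r v n \<omega> \<noteq> 1" by (auto simp: Alr_eq)
    then show "\<omega> \<in> (\<Union>r\<in>{..<Suc m}. \<Union>N. ?E r N)" using r \<omega> by blast
  qed
  have "measure M (\<Union>n\<in>{1..}. {\<omega>\<in>space M. surplus u X Y I n \<omega> < 0}) \<le> measure M (\<Union>r\<in>{..<Suc m}. \<Union>N. ?E r N)"
    by (rule finite_measure_mono[OF sub]) (use Eev in auto)
  also have "\<dots> \<le> real (Suc m) * exp (- R * v)" by (rule union_bound)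
  also have "\<dots> = (real m + 1) * exp (- R * u / (real m + 1))" unfolding v_def by simp
  finally show ?thesis .
qed

end

theorem theorem3p1:
  fixes M :: "'a measure" and m :: nat
    and X Y I :: "nat \<Rightarrow> 'a \<Rightarrow> real" and R u :: real
  assumes P: "prob_space M"
    and X_rv: "\<And>n. n \<ge> 1 \<Longrightarrow> X n \<in> borel_measurable M"
    and Y_rv: "\<And>n. n \<ge> 1 \<Longrightarrow> Y n \<in> borel_measurable M"
    and I_rv: "\<And>n. n \<ge> 1 \<Longrightarrow> I n \<in> borel_measurable M"
    and X_nonneg: "\<And>n \<omega>. n \<ge> 1 \<Longrightarrow> \<omega> \<in> space M \<Longrightarrow> X n \<omega> \<ge> 0"
    and Y_nonneg: "\<And>n \<omega>. n \<ge> 1 \<Longrightarrow> \<omega> \<in> space M \<Longrightarrow> Y n \<omega> \<ge> 0"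
    and I_nonneg: "\<And>n \<omega>. n \<ge> 1 \<Longrightarrow> \<omega> \<in> space M \<Longrightarrow> I n \<omega> \<ge> 0"
    and X_int: "\<And>n. n \<ge> 1 \<Longrightarrow> integrable M (X n)"
    and Y_int: "\<And>n. n \<ge> 1 \<Longrightarrow> integrable M (Y n)"
    and I_int: "\<And>n. n \<ge> 1 \<Longrightarrow> integrable M (I n)"
    and X_id: "ident_distr M X"
    and Y_id: "ident_distr M Y"
    and I_id: "ident_distr M I"
    and X_mdep: "m_dependent M m X"
    and Y_mdep: "m_dependent M m Y"
    and I_indep: "prob_space.indep_vars M (\<lambda>_. borel) I {1..}"
    and XYI_indep: "prob_space.indep_sets M
          (\<lambda>j::nat. if j = 0 then gen_sigma M X {1..}
                     else if j = 1 then gen_sigma M Y {1..}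
                     else gen_sigma M I {1..}) {0, 1, 2}"
    and R_pos: "R > 0"
    and R_lund: "(\<integral>\<^sup>+ \<omega>. ennreal (exp (R * (Y 1 \<omega> / (1 + I 1 \<omega>) - X 1 \<omega>))) \<partial>M) \<le> 1"
    and u_large: "u > (real m + 1) * ln (real m + 1) / R"
  shows "ruin_prob M X Y I u \<le> (real m + 1) * exp (- R * u / (real m + 1))"
proof -
  have L: "ruin M m X Y I R"
    unfolding ruin_def ruin_axioms_def
    using P X_rv Y_rv I_rv I_nonneg X_id Y_id I_id X_mdep Y_mdep I_indep XYI_indep R_pos R_lund
    by blast
  show ?thesis unfolding ruin_prob_def by (rule ruin.main[OF L])
qed

end
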